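(* For every $n\ge2$, $$|\mathcal{B}_n(321)|=C(n)-C(n-1)=\frac{3}{n+1}\binom{2n-2}{n-2},$$ where $C(m)=\frac{1}{m+1}\binom{2m}{m}$ is the $m$-th Catalan number.
   Context: A ballot permutation is a $\pi\in\mathfrak{S}_n$ such that every prefix $\pi_1\cdots\pi_i$ has at most as many descents ($\pi_j>\pi_{j+1}$) as ascents ($\pi_j<\pi_{j+1}$); $\mathcal{B}_n$ denotes the set of them. A permutation avoids the pattern $\sigma\in\mathfrak{S}_k$ if it has no subsequence order-isomorphic to $\sigma$; $\mathcal{B}_n(\sigma)$ is the set of $\sigma$-avoiding elements of $\mathcal{B}_n$. *)

theory Defs
  imports Complex_Main
begin

definition perms :: "nat \<Rightarrow> nat list set" where
  "perms n = {xs. distinct xs \<and> set xs = {1..n}}"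

text \<open>Number of ascents / descents of the prefix of length i
  (positions j with j+1 < i, 0-indexed).\<close>
definition asc_pref :: "nat list \<Rightarrow> nat \<Rightarrow> nat" where
  "asc_pref xs i = card {j. j + 1 < i \<and> xs ! j < xs ! (j + 1)}"

definition des_pref :: "nat list \<Rightarrow> nat \<Rightarrow> nat" where
  "des_pref xs i = card {j. j + 1 < i \<and> xs ! j > xs ! (j + 1)}"

definition ballot :: "nat list \<Rightarrow> bool" where
  "ballot xs \<longleftrightarrow> (\<forall>i. 1 \<le> i \<and> i \<le> length xs \<longrightarrow> des_pref xs i \<le> asc_pref xs i)"

definition contains :: "nat list \<Rightarrow> nat list \<Rightarrow> bool" where
  "contains xs sigma \<longleftrightarrow>
     (\<exists>f. (\<forall>a b. a < b \<and> b < length sigma \<longrightarrow> f a < f b)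
        \<and> (\<forall>a < length sigma. f a < length xs)
        \<and> (\<forall>a < length sigma. \<forall>b < length sigma.
              (xs ! f a < xs ! f b \<longleftrightarrow> sigma ! a < sigma ! b)))"

definition avoids :: "nat list \<Rightarrow> nat list \<Rightarrow> bool" where
  "avoids xs sigma \<longleftrightarrow> \<not> contains xs sigma"

definition ballot_avoiding :: "nat \<Rightarrow> nat list \<Rightarrow> nat list set" where
  "ballot_avoiding n sigma = {xs \<in> perms n. ballot xs \<and> avoids xs sigma}"

definition catalan :: "nat \<Rightarrow> real" where
  "catalan m = (real ((2 * m) choose m)) / real (m + 1)"

end

theory Submission
  imports Defs
begin

fun av :: "nat list \<Rightarrow> bool" where
  "av [] = True"
| "av (x # xs) = (av xs \<and> sorted (filter (\<lambda>y. y < x) xs))"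

definition c321 :: "nat list \<Rightarrow> bool" where
  "c321 xs \<longleftrightarrow> (\<exists>i j k. i < j \<and> j < k \<and> k < length xs \<and> xs ! j < xs ! i \<and> xs ! k < xs ! j)"

lemma ex_pair_Cons:
  "(\<exists>j k. j < k \<and> k < length (b # ys) \<and> P ((b # ys) ! j) ((b # ys) ! k)) \<longleftrightarrow>
   (\<exists>y\<in>set ys. P b y) \<or> (\<exists>j k. j < k \<and> k < length ys \<and> P (ys ! j) (ys ! k))"
proof
  assume "\<exists>j k. j < k \<and> k < length (b # ys) \<and> P ((b # ys) ! j) ((b # ys) ! k)"
  then obtain j k where h: "j < k" "k < length (b # ys)" "P ((b # ys) ! j) ((b # ys) ! k)" by blast
  obtain k' where k: "k = Suc k'" using h(1) by (cases k) auto
  show "(\<exists>y\<in>set ys. P b y) \<or> (\<exists>j k. j < k \<and> k < length ys \<and> P (ys ! j) (ys ! k))"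
  proof (cases j)
    case 0
    then show ?thesis using h k nth_mem[of k' ys] by auto
  next
    case (Suc j')
    then show ?thesis using h k by auto
  qed
next
  assume "(\<exists>y\<in>set ys. P b y) \<or> (\<exists>j k. j < k \<and> k < length ys \<and> P (ys ! j) (ys ! k))"
  then show "\<exists>j k. j < k \<and> k < length (b # ys) \<and> P ((b # ys) ! j) ((b # ys) ! k)"
  proof
    assume "\<exists>y\<in>set ys. P b y"
    then obtain k where "k < length ys" "P b (ys ! k)" by (auto simp: in_set_conv_nth)
    then show ?thesis by (intro exI[of _ 0] exI[of _ "Suc k"]) auto
  next
    assume "\<exists>j k. j < k \<and> k < length ys \<and> P (ys ! j) (ys ! k)"
    then obtain j k where "j < k" "k < length ys" "P (ys ! j) (ys ! k)" by blast
    then show ?thesis by (intro exI[of _ "Suc j"] exI[of _ "Suc k"]) auto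
  qed
qed

lemma ex_triple_Cons:
  "(\<exists>i j k. i < j \<and> j < k \<and> k < length (b # ys) \<and> P ((b # ys) ! i) ((b # ys) ! j) ((b # ys) ! k)) \<longleftrightarrow>
   (\<exists>j k. j < k \<and> k < length ys \<and> P b (ys ! j) (ys ! k)) \<or>
   (\<exists>i j k. i < j \<and> j < k \<and> k < length ys \<and> P (ys ! i) (ys ! j) (ys ! k))"
proof
  assume "\<exists>i j k. i < j \<and> j < k \<and> k < length (b # ys) \<and> P ((b # ys) ! i) ((b # ys) ! j) ((b # ys) ! k)"
  then obtain i j k where h: "i < j" "j < k" "k < length (b # ys)" "P ((b # ys) ! i) ((b # ys) ! j) ((b # ys) ! k)" by blast
  obtain k' where k: "k = Suc k'" using h by (cases k) auto
  obtain j' where j: "j = Suc j'" using h by (cases j) auto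
  show "(\<exists>j k. j < k \<and> k < length ys \<and> P b (ys ! j) (ys ! k)) \<or>
   (\<exists>i j k. i < j \<and> j < k \<and> k < length ys \<and> P (ys ! i) (ys ! j) (ys ! k))"
  proof (cases i)
    case 0
    then show ?thesis using h k j by auto
  next
    case (Suc i')
    then show ?thesis using h k j by auto
  qed
next
  assume "(\<exists>j k. j < k \<and> k < length ys \<and> P b (ys ! j) (ys ! k)) \<or>
   (\<exists>i j k. i < j \<and> j < k \<and> k < length ys \<and> P (ys ! i) (ys ! j) (ys ! k))"
  then show "\<exists>i j k. i < j \<and> j < k \<and> k < length (b # ys) \<and> P ((b # ys) ! i) ((b # ys) ! j) ((b # ys) ! k)"
  proof
    assume "\<exists>j k. j < k \<and> k < length ys \<and> P b (ys ! j) (ys ! k)"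
    then obtain j k where "j < k" "k < length ys" "P b (ys ! j) (ys ! k)" by blast
    then show ?thesis by (intro exI[of _ 0] exI[of _ "Suc j"] exI[of _ "Suc k"]) auto
  next
    assume "\<exists>i j k. i < j \<and> j < k \<and> k < length ys \<and> P (ys ! i) (ys ! j) (ys ! k)"
    then obtain i j k where "i < j" "j < k" "k < length ys" "P (ys ! i) (ys ! j) (ys ! k)" by blast
    then show ?thesis by (intro exI[of _ "Suc i"] exI[of _ "Suc j"] exI[of _ "Suc k"]) auto
  qed
qed

lemma sorted_filter_iff:
  "sorted (filter (\<lambda>y. y < x) xs) \<longleftrightarrow> \<not> (\<exists>j k. j < k \<and> k < length xs \<and> xs ! j < x \<and> xs ! k < xs ! j)"
proof (induction xs)
  case Nil
  then show ?case by simp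
next
  case (Cons b ys)
  have e: "(\<exists>j k. j < k \<and> k < length (b # ys) \<and> (\<lambda>u v. u < x \<and> v < u) ((b # ys) ! j) ((b # ys) ! k)) \<longleftrightarrow>
   (\<exists>y\<in>set ys. b < x \<and> y < b) \<or> (\<exists>j k. j < k \<and> k < length ys \<and> (ys ! j < x \<and> ys ! k < ys ! j))"
    by (rule ex_pair_Cons)
  show ?case using e Cons.IH by (auto simp: not_le)
qed

lemma av_iff: "av xs \<longleftrightarrow> \<not> c321 xs"
proof (induction xs)
  case Nil
  then show ?case by (simp add: c321_def)
next
  case (Cons b ys)
  have e: "(\<exists>i j k. i < j \<and> j < k \<and> k < length (b # ys) \<and> (\<lambda>u v w. v < u \<and> w < v) ((b # ys) ! i) ((b # ys) ! j) ((b # ys) ! k)) \<longleftrightarrow>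
   (\<exists>j k. j < k \<and> k < length ys \<and> (ys ! j < b \<and> ys ! k < ys ! j)) \<or>
   (\<exists>i j k. i < j \<and> j < k \<and> k < length ys \<and> (ys ! j < ys ! i \<and> ys ! k < ys ! j))"
    by (rule ex_triple_Cons)
  show ?case using e Cons.IH sorted_filter_iff[of b ys] unfolding c321_def by auto
qed

lemma contains_iff: "contains xs [3,2,1] \<longleftrightarrow> c321 xs"
proof
  assume "contains xs [3,2,1]"
  then obtain f where f: "\<forall>a b. a < b \<and> b < length [3,2,1::nat] \<longrightarrow> f a < f b" "\<forall>a<length [3,2,1::nat]. f a < length xs"
    "\<forall>a<length [3,2,1::nat]. \<forall>b<length [3,2,1::nat]. (xs ! f a < xs ! f b \<longleftrightarrow> [3,2,1::nat] ! a < [3,2,1::nat] ! b)"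
    unfolding contains_def by blast
  have "f 0 < f 1" "f 1 < f 2" "f 2 < length xs" using f(1,2) by auto
  moreover have "xs ! f 1 < xs ! f 0" using f(3)[rule_format, of 1 0] by simp
  moreover have "xs ! f 2 < xs ! f 1" using f(3)[rule_format, of 2 1] by simp
  ultimately show "c321 xs" unfolding c321_def by blast
next
  assume "c321 xs"
  then obtain i j k where h: "i < j" "j < k" "k < length xs" "xs ! j < xs ! i" "xs ! k < xs ! j"
    unfolding c321_def by blast
  define f where "f = (\<lambda>a::nat. if a = 0 then i else if a = 1 then j else k)"
  have l3: "a < 3 \<Longrightarrow> a = 0 \<or> a = 1 \<or> a = 2" for a :: nat by auto
  show "contains xs [3,2,1]" unfolding contains_def
  proof (intro exI[of _ f] conjI allI impI)
    fix a b :: nat assume "a < b \<and> b < length [3,2,1::nat]"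
    then show "f a < f b" using l3[of a] l3[of b] h by (auto simp: f_def)
  next
    fix a :: nat assume "a < length [3,2,1::nat]"
    then show "f a < length xs" using l3[of a] h by (auto simp: f_def)
  next
    fix a b :: nat assume "a < length [3,2,1::nat]" "b < length [3,2,1::nat]"
    then show "(xs ! f a < xs ! f b) = ([3,2,1::nat] ! a < [3,2,1] ! b)"
      using l3[of a] l3[of b] h by (auto simp: f_def)
  qed
qed


definition AA :: "nat \<Rightarrow> nat list set" where
  "AA n = {xs. distinct xs \<and> set xs = {1..n} \<and> av xs}"

definition TT :: "nat \<Rightarrow> nat \<Rightarrow> nat list set" where
  "TT n j = {xs \<in> AA n. sorted (drop j xs)}"

lemma AA_length: "xs \<in> AA n \<Longrightarrow> length xs = n"
  unfolding AA_def using distinct_card by fastforce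

lemma finite_AA: "finite (AA n)"
proof -
  have "AA n \<subseteq> {xs. set xs \<subseteq> {1..n} \<and> length xs = n}" using AA_length by (auto simp: AA_def)
  moreover have "finite {xs. set xs \<subseteq> {1..n} \<and> length xs = n}"
    by (rule finite_lists_length_eq) simp
  ultimately show ?thesis by (rule finite_subset)
qed

lemma finite_TT: "finite (TT n j)"
  using finite_AA unfolding TT_def by simp

lemma av_ins:
  assumes "\<forall>y\<in>set us \<union> set vs. y < m"
  shows "av (us @ m # vs) \<longleftrightarrow> av (us @ vs) \<and> sorted vs"
  using assms
proof (induction us)
  case Nil
  then have "filter (\<lambda>y. y < m) vs = vs" by (auto simp: filter_id_conv)
  then show ?case by simp
next
  case (Cons u us)
  then have "filter (\<lambda>y. y < u) (us @ m # vs) = filter (\<lambda>y. y < u) (us @ vs)" by auto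
  then show ?case using Cons by auto
qed

lemma sorted_drop_ins:
  assumes "\<forall>y\<in>set us \<union> set vs. y < m" "sorted vs"
  shows "sorted (drop j (us @ m # vs)) \<longleftrightarrow> (if vs = [] then sorted (drop j us) else length us < j)"
proof (cases "j \<le> length us")
  case True
  then have d: "drop j (us @ m # vs) = drop j us @ m # vs" by simp
  show ?thesis
  proof (cases "vs = []")
    case True
    then show ?thesis using d assms(1) by (auto simp: sorted_append dest: in_set_dropD intro: less_imp_le)
  next
    case False
    then obtain v where "v \<in> set vs" by (cases vs) auto
    then show ?thesis using d assms(1) False True by (auto simp: sorted_append not_le)
  qed
next
  case False
  then have d: "drop j (us @ m # vs) = drop (j - length us - 1) vs"
    by (simp add: drop_Cons')
  show ?thesis using False d assms(2) by (auto simp: sorted_wrt_drop)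
qed


definition ins :: "nat \<Rightarrow> nat \<Rightarrow> nat list \<Rightarrow> nat list" where
  "ins m p xs = take p xs @ m # drop p xs"

lemma TT_count:
  "card (TT (Suc n) j) = (\<Sum>p<n. if p < j then card (TT n p) else 0) + card (TT n j)"
proof -
  define B where "B p = {xs \<in> AA n. sorted (drop p xs) \<and> sorted (drop j (ins (Suc n) p xs))}" for p
  define S where "S = Sigma {..n} B"
  have lt: "\<forall>y\<in>set (take p xs) \<union> set (drop p xs). y < Suc n" if "xs \<in> AA n" for xs p
  proof -
    have "set (take p xs) \<union> set (drop p xs) = set xs" by (metis set_append append_take_drop_id)
    then show ?thesis using that by (auto simp: AA_def)
  qed
  have inj: "inj_on (\<lambda>(p, xs). ins (Suc n) p xs) S"
  proof (rule inj_onI, clarify)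
    fix p xs p' xs'
    assume a: "(p, xs) \<in> S" "(p', xs') \<in> S" "ins (Suc n) p xs = ins (Suc n) p' xs'"
    have m: "Suc n \<notin> set xs" "Suc n \<notin> set xs'" using a(1,2) by (auto simp: S_def B_def AA_def)
    have nt: "Suc n \<notin> set (take p xs)" "Suc n \<notin> set (drop p xs)"
      using m(1) by (auto dest: in_set_takeD in_set_dropD)
    have "take p xs = take p' xs' \<and> drop p xs = drop p' xs'"
      using a(3) append_Cons_eq_iff[OF nt] unfolding ins_def by simp
    moreover have "p \<le> length xs" "p' \<le> length xs'"
      using a(1,2) AA_length by (auto simp: S_def B_def)
    ultimately show "p = p' \<and> xs = xs'"
      by (metis append_take_drop_id length_take min_absorb2)
  qed
  have img: "(\<lambda>(p, xs). ins (Suc n) p xs) ` S = TT (Suc n) j"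
  proof
    show "(\<lambda>(p, xs). ins (Suc n) p xs) ` S \<subseteq> TT (Suc n) j"
    proof clarify
      fix p xs assume "(p, xs) \<in> S"
      then have h: "p \<le> n" "xs \<in> AA n" "sorted (drop p xs)" "sorted (drop j (ins (Suc n) p xs))"
        by (auto simp: S_def B_def)
      have "Suc n \<notin> set xs" using h(2) by (auto simp: AA_def)
      have dx: "distinct (take p xs @ drop p xs)" using h(2) by (simp add: AA_def)
      have nm: "Suc n \<notin> set (take p xs)" "Suc n \<notin> set (drop p xs)"
        using \<open>Suc n \<notin> set xs\<close> by (auto dest: in_set_takeD in_set_dropD)
      have su: "set (take p xs) \<union> set (drop p xs) = set xs" by (metis set_append append_take_drop_id)
      have "distinct (ins (Suc n) p xs)"
        using dx nm unfolding ins_def distinct_append by simp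
      moreover have "set (ins (Suc n) p xs) = insert (Suc n) (set xs)"
        using su unfolding ins_def by auto
      moreover have "av (ins (Suc n) p xs)"
        unfolding ins_def using av_ins[OF lt[OF h(2)]] h by (simp add: AA_def)
      ultimately show "ins (Suc n) p xs \<in> TT (Suc n) j"
        using h(2,4) by (auto simp: TT_def AA_def)
    qed
  next
    show "TT (Suc n) j \<subseteq> (\<lambda>(p, xs). ins (Suc n) p xs) ` S"
    proof
      fix ys assume ys: "ys \<in> TT (Suc n) j"
      then have "Suc n \<in> set ys" by (auto simp: TT_def AA_def)
      then obtain us vs where uv: "ys = us @ Suc n # vs" by (meson split_list)
      have d: "distinct (us @ vs)" "Suc n \<notin> set us" "Suc n \<notin> set vs"
        using ys uv by (auto simp: TT_def AA_def)
      have st: "set (us @ vs) = {1..n}"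
      proof -
        have "insert (Suc n) (set (us @ vs)) = {1..Suc n}" using ys uv by (auto simp: TT_def AA_def)
        have "set (us @ vs) = insert (Suc n) (set (us @ vs)) - {Suc n}" using d by auto
        also have "\<dots> = {1..Suc n} - {Suc n}" using \<open>insert (Suc n) (set (us @ vs)) = {1..Suc n}\<close> by simp
        also have "\<dots> = {1..n}" by auto
        finally show ?thesis .
      qed
      have l: "\<forall>y\<in>set us \<union> set vs. y < Suc n" using st by auto
      have av: "av (us @ vs)" "sorted vs" using av_ins[OF l] ys uv by (auto simp: TT_def AA_def)
      have xs: "us @ vs \<in> AA n" using d st av by (simp add: AA_def)
      have len: "length us \<le> n" using AA_length[OF xs] by simp
      have e: "ins (Suc n) (length us) (us @ vs) = ys" using uv by (simp add: ins_def)
      have "(length us, us @ vs) \<in> S"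
        using xs len av e ys by (simp add: S_def B_def TT_def)
      then show "ys \<in> (\<lambda>(p, xs). ins (Suc n) p xs) ` S"
        by (rule image_eqI[rotated]) (simp add: e)
    qed
  qed
  have "card (TT (Suc n) j) = card S" using card_image[OF inj] img by simp
  also have "\<dots> = (\<Sum>p\<le>n. card (B p))"
  proof -
    have "finite (B p)" for p unfolding B_def using finite_AA by simp
    then show ?thesis unfolding S_def by simp
  qed
  also have "\<dots> = (\<Sum>p<n. card (B p)) + card (B n)"
    by (simp add: lessThan_Suc_atMost[symmetric])
  also have "(\<Sum>p<n. card (B p)) = (\<Sum>p<n. if p < j then card (TT n p) else 0)"
  proof (rule sum.cong)
    fix p assume "p \<in> {..<n}"
    then have p: "p < n" by simp
    have "B p = (if p < j then TT n p else {})"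
    proof -
      { fix xs assume xs: "xs \<in> AA n" "sorted (drop p xs)"
        have "drop p xs \<noteq> []" using AA_length[OF xs(1)] p by simp
        then have "sorted (drop j (ins (Suc n) p xs)) \<longleftrightarrow> p < j"
          using sorted_drop_ins[OF lt[OF xs(1)] xs(2)] AA_length[OF xs(1)] p
          unfolding ins_def by simp }
      then show ?thesis unfolding B_def TT_def by auto
    qed
    then show "card (B p) = (if p < j then card (TT n p) else 0)" by simp
  qed simp
  also have "B n = TT n j"
  proof -
    { fix xs assume xs: "xs \<in> AA n"
      have "drop n xs = []" using AA_length[OF xs] by simp
      then have "sorted (drop j (ins (Suc n) n xs)) \<longleftrightarrow> sorted (drop j xs)"
        using sorted_drop_ins[OF lt[OF xs], of n j] AA_length[OF xs]
        unfolding ins_def by simp }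
    then show ?thesis unfolding B_def TT_def using AA_length by auto
  qed
  finally show ?thesis .
qed


definition bal :: "nat \<Rightarrow> nat \<Rightarrow> int" where
  "bal n j = int ((n + j) choose n) - int ((n + j) choose Suc n)"

lemma sum_bal: "(\<Sum>p\<le>j. bal n p) = bal (Suc n) j"
proof (induction j)
  case 0
  then show ?case by (simp add: bal_def)
next
  case (Suc j)
  define N where "N = Suc (n + j)"
  have e1: "Suc n + Suc j = Suc N" "n + Suc j = N" "Suc n + j = N" by (simp_all add: N_def)
  have p1: "Suc N choose Suc n = (N choose n) + (N choose Suc n)" by simp
  have p2: "Suc N choose Suc (Suc n) = (N choose Suc n) + (N choose Suc (Suc n))" by simp
  have "(\<Sum>p\<le>Suc j. bal n p) = bal (Suc n) j + bal n (Suc j)" using Suc by simp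
  also have "\<dots> = bal (Suc n) (Suc j)"
    unfolding bal_def e1 p1 p2 by simp
  finally show ?case .
qed

lemma TT_ge: "n \<le> j \<Longrightarrow> TT n j = AA n"
  unfolding TT_def using AA_length by auto

lemma AA_0: "AA 0 = {[]}"
  unfolding AA_def by auto

lemma sum_if_less: "(j::nat) \<le> n \<Longrightarrow> (\<Sum>p<n. if p < j then f p else 0) = (\<Sum>p<j. f p :: nat)"
proof -
  assume "j \<le> n"
  then have "{p \<in> {..<n}. p < j} = {..<j}" by (auto intro: less_le_trans)
  then show ?thesis using sum.inter_filter[of "{..<n}" f "\<lambda>p. p < j"] by simp
qed

lemma TT_closed: "j \<le> n \<Longrightarrow> int (card (TT n j)) = bal n j"
proof (induction n arbitrary: j)
  case 0
  then show ?case by (simp add: TT_ge AA_0 bal_def)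
next
  case (Suc n)
  show ?case
  proof (cases "j \<le> n")
    case True
    have "card (TT (Suc n) j) = (\<Sum>p<j. card (TT n p)) + card (TT n j)"
      using TT_count sum_if_less[OF True] by simp
    also have "\<dots> = (\<Sum>p\<le>j. card (TT n p))" by (simp add: lessThan_Suc_atMost[symmetric])
    finally have "int (card (TT (Suc n) j)) = (\<Sum>p\<le>j. int (card (TT n p)))" by simp
    also have "\<dots> = (\<Sum>p\<le>j. bal n p)" using Suc.IH True by (intro sum.cong) auto
    finally show ?thesis by (simp add: sum_bal)
  next
    case False
    then have j: "j = Suc n" using Suc.prems by simp
    have "card (TT (Suc n) j) = (\<Sum>p<n. card (TT n p)) + card (TT n n)"
      using TT_count[of n j] sum_if_less[of n n] j TT_ge[of n "Suc n"] TT_ge[of n n] by simp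
    also have "\<dots> = (\<Sum>p\<le>n. card (TT n p))" by (simp add: lessThan_Suc_atMost[symmetric])
    finally have "int (card (TT (Suc n) j)) = (\<Sum>p\<le>n. int (card (TT n p)))" by simp
    also have "\<dots> = (\<Sum>p\<le>n. bal n p)" using Suc.IH by (intro sum.cong) auto
    also have "\<dots> = bal (Suc n) n" by (simp add: sum_bal)
    also have "\<dots> = bal (Suc n) (Suc n)"
    proof -
      define N where "N = Suc (2 * n)"
      have e: "Suc n + n = N" "Suc n + Suc n = Suc N" by (simp_all add: N_def)
      have p1: "Suc N choose Suc n = (N choose n) + (N choose Suc n)" by simp
      have p2: "Suc N choose Suc (Suc n) = (N choose Suc n) + (N choose Suc (Suc n))" by simp
      have s: "N choose n = N choose Suc n"
        using binomial_symmetric[of n N] by (simp add: N_def)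
      show ?thesis unfolding bal_def e p1 p2 s by simp
    qed
    finally show ?thesis using j by simp
  qed
qed

lemma cat_aux: "Suc n * (2 * n choose Suc n) = n * (2 * n choose n)"
proof (cases n)
  case 0
  then show ?thesis by simp
next
  case (Suc m)
  have e: "2 * n = Suc (Suc m + m)" using Suc by simp
  show ?thesis unfolding e unfolding Suc by (rule Suc_times_binomial_add)
qed

lemma card_AA: "real (card (AA n)) = catalan n"
proof -
  have "int (card (AA n)) = bal n n" using TT_closed[of n n] TT_ge[of n n] by simp
  then have i: "int (card (AA n)) = int (2 * n choose n) - int (2 * n choose Suc n)"
    unfolding bal_def by (simp add: mult_2)
  have "Suc n * (2 * n choose Suc n) \<le> Suc n * (2 * n choose n)"
    unfolding cat_aux by (intro mult_le_mono1) simp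
  then have le: "2 * n choose Suc n \<le> 2 * n choose n" by (metis Suc_mult_le_cancel1)
  have "card (AA n) = (2 * n choose n) - (2 * n choose Suc n)" using i le by linarith
  then have "real (card (AA n)) = real (2 * n choose n) - real (2 * n choose Suc n)"
    using le by (simp add: of_nat_diff)
  also have "\<dots> = real (2 * n choose n) / real (n + 1)"
  proof -
    have "real (Suc n) * real (2 * n choose Suc n) = real n * real (2 * n choose n)"
      using cat_aux[of n] by (metis of_nat_mult)
    then show ?thesis by (simp add: field_simps)
  qed
  finally show ?thesis unfolding catalan_def .
qed


lemma AA_distinct_01:
  assumes "xs \<in> AA n" "2 \<le> n" shows "xs ! 0 \<noteq> xs ! 1"
proof -
  have "length xs = n" using AA_length[OF assms(1)] .
  moreover have "distinct xs" using assms(1) by (simp add: AA_def)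
  ultimately show ?thesis using assms(2) by (simp add: nth_eq_iff_index_eq)
qed

lemma ballot_iff:
  assumes xs: "xs \<in> AA n" and n: "2 \<le> n"
  shows "ballot xs \<longleftrightarrow> xs ! 0 < xs ! 1"
proof
  assume b: "ballot xs"
  have len: "length xs = n" using AA_length[OF xs] .
  show "xs ! 0 < xs ! 1"
  proof (rule ccontr)
    assume "\<not> xs ! 0 < xs ! 1"
    then have gt: "xs ! 1 < xs ! 0" using AA_distinct_01[OF xs n] by simp
    have "{j. j + 1 < 2 \<and> xs ! (j + 1) < xs ! j} = {0}" using gt by auto
    moreover have "{j. j + 1 < 2 \<and> xs ! j < xs ! (j + 1)} = {}" using gt by auto
    ultimately have "des_pref xs 2 = 1" "asc_pref xs 2 = 0"
      unfolding des_pref_def asc_pref_def by simp_all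
    moreover have "des_pref xs 2 \<le> asc_pref xs 2" using b len n unfolding ballot_def by auto
    ultimately show False by simp
  qed
next
  assume lt: "xs ! 0 < xs ! 1"
  have len: "length xs = n" using AA_length[OF xs] .
  have dist: "distinct xs" using xs by (simp add: AA_def)
  have nc: "\<not> c321 xs" using xs av_iff by (simp add: AA_def)
  show "ballot xs" unfolding ballot_def
  proof (intro allI impI)
    fix i assume i: "1 \<le> i \<and> i \<le> length xs"
    let ?D = "{j. j + 1 < i \<and> xs ! j > xs ! (j + 1)}"
    let ?A = "{j. j + 1 < i \<and> xs ! j < xs ! (j + 1)}"
    have "card ?D \<le> card ?A"
    proof (rule card_inj_on_le[where f = "\<lambda>j. j - 1"])
      show "inj_on (\<lambda>j. j - 1) ?D"
      proof (rule inj_onI)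
        fix a b assume "a \<in> ?D" "b \<in> ?D" "a - 1 = b - 1"
        moreover have "a \<noteq> 0" "b \<noteq> 0"
        proof -
          { fix j assume "j \<in> ?D" "j = 0" then have False using lt by simp }
          then show "a \<noteq> 0" "b \<noteq> 0" using \<open>a \<in> ?D\<close> \<open>b \<in> ?D\<close> by blast+
        qed
        ultimately show "a = b" by simp
      qed
    next
      show "(\<lambda>j. j - 1) ` ?D \<subseteq> ?A"
      proof clarify
        fix j assume j: "j + 1 < i" "xs ! (j + 1) < xs ! j"
        have j0: "j \<noteq> 0"
        proof
          assume "j = 0" then show False using j lt by simp
        qed
        then obtain k where k: "j = Suc k" by (cases j) auto
        have "xs ! k \<noteq> xs ! j" using dist j i k by (simp add: nth_eq_iff_index_eq)
        moreover have "\<not> xs ! j < xs ! k"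
        proof
          assume "xs ! j < xs ! k"
          then have "c321 xs" unfolding c321_def using j i k
            by (intro exI[of _ k] exI[of _ j] exI[of _ "j + 1"]) auto
          then show False using nc by simp
        qed
        ultimately show "j - 1 + 1 < i \<and> xs ! (j - 1) < xs ! (j - 1 + 1)" using j k by auto
      qed
    next
      show "finite ?A" by (rule finite_subset[of _ "{..<i}"]) auto
    qed
    then show "des_pref xs i \<le> asc_pref xs i" unfolding des_pref_def asc_pref_def .
  qed
qed

lemma av_map_Suc: "av (map Suc xs) = av xs"
proof (induction xs)
  case Nil
  then show ?case by simp
next
  case (Cons x xs)
  have "filter (\<lambda>y. y < Suc x) (map Suc xs) = map Suc (filter (\<lambda>y. y < x) xs)"
    by (induction xs) auto
  moreover have "sorted (map Suc l) = sorted l" for l :: "nat list"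
    by (simp add: sorted_map)
  ultimately show ?case using Cons by simp
qed

lemma av_one:
  assumes "1 < a" "0 \<notin> set zs"
  shows "av (a # 1 # zs) \<longleftrightarrow> av (a # zs)"
proof -
  have "filter (\<lambda>y. y < 1) zs = []" using assms(2) by (induction zs) auto
  moreover have "\<forall>y\<in>set zs. 1 \<le> y"
  proof
    fix y assume "y \<in> set zs" then have "y \<noteq> 0" using assms(2) by metis
    then show "1 \<le> y" by simp
  qed
  ultimately show ?thesis using assms(1) by auto
qed

definition gg :: "nat list \<Rightarrow> nat list" where
  "gg xs = Suc (hd xs) # 1 # map Suc (tl xs)"

lemma D_card:
  assumes "1 \<le> m"
  shows "card {xs \<in> AA (Suc m). xs ! 1 < xs ! 0} = card (AA m)"
proof -
  have ne: "xs \<noteq> []" if "xs \<in> AA m" for xs using AA_length[OF that] assms by auto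
  have inj: "inj_on gg (AA m)"
  proof (rule inj_onI)
    fix xs ys assume a: "xs \<in> AA m" "ys \<in> AA m" "gg xs = gg ys"
    then have "hd xs = hd ys" "map Suc (tl xs) = map Suc (tl ys)" by (auto simp: gg_def)
    then have "hd xs = hd ys" "tl xs = tl ys" by (auto simp: inj_map_eq_map)
    then show "xs = ys" using ne[OF a(1)] ne[OF a(2)] by (metis list.collapse)
  qed
  have img: "gg ` AA m = {xs \<in> AA (Suc m). xs ! 1 < xs ! 0}"
  proof
    show "gg ` AA m \<subseteq> {xs \<in> AA (Suc m). xs ! 1 < xs ! 0}"
    proof clarify
      fix xs assume xs: "xs \<in> AA m"
      obtain b ws where bw: "xs = b # ws" using ne[OF xs] by (cases xs) auto
      have d: "distinct (b # ws)" "set (b # ws) = {1..m}" "av (b # ws)" using xs bw by (auto simp: AA_def)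
      have s: "insert b (set ws) = {1..m}" using d(2) by simp
      have "b \<in> {1..m}" using s by blast
      then have "1 \<le> b" by simp
      have "0 \<notin> set ws"
      proof
        assume "0 \<in> set ws" then have "(0::nat) \<in> {1..m}" using s by blast
        then show False by simp
      qed
      have g: "gg xs = Suc b # 1 # map Suc ws" using bw by (simp add: gg_def)
      have "distinct (gg xs)" using d(1) \<open>0 \<notin> set ws\<close> \<open>1 \<le> b\<close> unfolding g
        by (auto simp: distinct_map)
      moreover have "set (gg xs) = {1..Suc m}"
      proof -
        have "set (gg xs) = insert 1 (Suc ` set (b # ws))" unfolding g by auto
        also have "\<dots> = insert 1 (Suc ` {1..m})" using d(2) by simp
        also have "\<dots> = {1..Suc m}" by (auto simp: image_Suc_atLeastAtMost)
        finally show ?thesis .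
      qed
      moreover have "av (gg xs)"
      proof -
        have "av (gg xs) = av (Suc b # map Suc ws)" unfolding g
          by (rule av_one) (use \<open>1 \<le> b\<close> \<open>0 \<notin> set ws\<close> in auto)
        also have "\<dots> = av (b # ws)" using av_map_Suc[of "b # ws"] by simp
        finally show ?thesis using d(3) by simp
      qed
      moreover have "gg xs ! 1 < gg xs ! 0" using \<open>1 \<le> b\<close> unfolding g by simp
      ultimately show "gg xs \<in> AA (Suc m) \<and> gg xs ! 1 < gg xs ! 0" by (simp add: AA_def)
    qed
  next
    show "{xs \<in> AA (Suc m). xs ! 1 < xs ! 0} \<subseteq> gg ` AA m"
    proof clarify
      fix ys assume ys: "ys \<in> AA (Suc m)" "ys ! 1 < ys ! 0"
      have "length ys = Suc m" using AA_length[OF ys(1)] .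
      then obtain a c zs where acz: "ys = a # c # zs" using assms
        by (cases ys; cases "tl ys") auto
      have d: "distinct (a # c # zs)" "set (a # c # zs) = {1..Suc m}" "av (a # c # zs)"
        using ys(1) acz by (auto simp: AA_def)
      have ca: "c < a" using ys(2) acz by simp
      have c1: "c = 1"
      proof (rule ccontr)
        assume "c \<noteq> 1"
        have "1 \<in> set (a # c # zs)" using d(2) by simp
        moreover have "1 \<le> c" using d(2) by auto
        ultimately have "1 \<in> set zs" using ca \<open>c \<noteq> 1\<close> by auto
        moreover have "sorted (filter (\<lambda>y. y < a) (c # zs))" using d(3) by simp
        ultimately have "c \<le> 1" using ca \<open>1 \<le> c\<close> by auto
        then show False using \<open>1 \<le> c\<close> \<open>c \<noteq> 1\<close> by simp
      qed
      define xs where "xs = map (\<lambda>z. z - 1) (a # zs)"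
      have z0: "0 \<notin> set (a # zs)"
      proof
        assume "0 \<in> set (a # zs)" then have "0 \<in> set (a # c # zs)" by auto
        then have "(0::nat) \<in> {1..Suc m}" by (metis d(2))
        then show False by simp
      qed
      have mx: "map Suc xs = a # zs"
        unfolding xs_def map_map
      proof (intro map_idI)
        fix x assume "x \<in> set (a # zs)" then have "x \<noteq> 0" using z0 by metis
        then show "(Suc \<circ> (\<lambda>z. z - 1)) x = x" by simp
      qed
      have dx: "distinct (map Suc xs)" using d(1) mx by simp
      then have "distinct xs" by (simp add: distinct_map)
      moreover have "set xs = {1..m}"
      proof -
        have "Suc ` set xs = set (a # zs)" using mx by (metis list.set_map)
        also have "\<dots> = {1..Suc m} - {1}" using d(1,2) c1 by auto
        also have "\<dots> = Suc ` {1..m}" by (auto simp: image_Suc_atLeastAtMost)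
        finally have "Suc ` set xs = Suc ` {1..m}" .
        then show ?thesis using inj_image_eq_iff[OF inj_Suc] by blast
      qed
      moreover have "av xs"
      proof -
        have "av (a # zs)" using d(3) c1 av_one[of a zs] ca z0 by simp
        then show ?thesis using mx av_map_Suc[of xs] by simp
      qed
      ultimately have xA: "xs \<in> AA m" by (simp add: AA_def)
      have "gg xs = ys"
      proof -
        obtain x' xs' where "xs = x' # xs'" unfolding xs_def by simp
        then have "Suc x' = a" "map Suc xs' = zs" using mx by auto
        then show ?thesis using \<open>xs = x' # xs'\<close> acz c1 by (simp add: gg_def)
      qed
      then show "ys \<in> gg ` AA m" using xA by blast
    qed
  qed
  show ?thesis using card_image[OF inj] img by simp
qed


lemma ba_eq:
  assumes "2 \<le> n"
  shows "ballot_avoiding n [3, 2, 1] = {xs \<in> AA n. xs ! 0 < xs ! 1}"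
proof -
  have "ballot_avoiding n [3, 2, 1] = {xs \<in> AA n. ballot xs}"
    unfolding ballot_avoiding_def AA_def perms_def avoids_def contains_iff av_iff by auto
  also have "\<dots> = {xs \<in> AA n. xs ! 0 < xs ! 1}" using ballot_iff assms by blast
  finally show ?thesis .
qed

lemma part1:
  assumes "2 \<le> n"
  shows "real (card (ballot_avoiding n [3, 2, 1])) = catalan n - catalan (n - 1)"
proof -
  obtain m where m: "n = Suc m" "1 \<le> m" using assms by (cases n) auto
  let ?B = "{xs \<in> AA n. xs ! 0 < xs ! 1}"
  let ?D = "{xs \<in> AA n. xs ! 1 < xs ! 0}"
  have e: "AA n = ?B \<union> ?D" using AA_distinct_01 assms by (auto simp: neq_iff)
  have i: "?B \<inter> ?D = {}" by auto
  have f: "finite ?B" "finite ?D" using finite_AA by auto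
  have "card (?B \<union> ?D) = card ?B + card ?D" by (rule card_Un_disjoint[OF f i])
  with arg_cong[OF e, of card] have "card (AA n) = card ?B + card ?D" by (rule trans)
  moreover have "card ?D = card (AA m)" unfolding m(1) by (rule D_card[OF m(2)])
  ultimately have "real (card ?B) = real (card (AA n)) - real (card (AA m))" by simp
  then show ?thesis using ba_eq[OF assms] card_AA m(1) by simp
qed

lemma alg_aux: fixes a X :: real assumes "a \<ge> 0"
  shows "2 * ((2 * a + 3) * X / (a + 1)) / (a + 3) - (a + 2) * X / (a + 1) / (a + 2) = 3 / (a + 3) * X"
proof -
  have h: "a + 1 \<noteq> 0" "a + 2 \<noteq> 0" "a + 3 \<noteq> 0" using assms by linarith+
  have e: "(a + 2) * X / (a + 1) / (a + 2) = X / (a + 1)" using h by simp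
  have "2 * ((2 * a + 3) * X / (a + 1)) / (a + 3) - X / (a + 1) = 3 / (a + 3) * X"
    using h by (simp add: divide_simps) (simp add: algebra_simps)
  then show ?thesis using e by simp
qed

lemma part2:
  assumes "2 \<le> n"
  shows "catalan n - catalan (n - 1) = 3 / real (n + 1) * real ((2 * n - 2) choose (n - 2))"
proof -
  obtain m where m: "n = m + 2" using assms by (metis add.commute le_Suc_ex)
  define X where "X = (Suc (Suc (m + m)) choose m)"
  define Z where "Z = (Suc (Suc (m + m)) choose Suc m)"
  define W where "W = (Suc (Suc (Suc (m + m))) choose Suc m)"
  define Y where "Y = (Suc (Suc (Suc (Suc (m + m)))) choose Suc (Suc m))"
  have f1: "Suc m * Z = Suc (Suc m) * X"
    using Suc_times_binomial_add[of m "Suc m"] unfolding X_def Z_def by (simp del: binomial_Suc_Suc)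
  have f2: "Suc (Suc m) * Y = Suc (Suc (Suc (Suc (m + m)))) * W"
    using Suc_times_binomial[of "Suc m" "Suc (Suc (Suc (m + m)))"] unfolding Y_def W_def .
  have f3: "Suc m * W = Suc (Suc (Suc (m + m))) * X"
    using Suc_times_binomial[of m "Suc (Suc (m + m))"] unfolding W_def X_def .
  have r1: "real Z = (m + 2) * real X / (m + 1)"
    using arg_cong[OF f1, of real] by (simp add: field_simps)
  have r2: "real Y = 2 * real W"
  proof -
    have "real (Suc (Suc m)) * real Y = real (Suc (Suc m)) * (2 * real W)"
      using arg_cong[OF f2, of real] by (simp add: algebra_simps)
    then show ?thesis by (simp only: mult_cancel_left) simp
  qed
  have r3: "real W = (2 * m + 3) * real X / (m + 1)"
    using arg_cong[OF f3, of real] by (simp add: field_simps)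
  have c1: "catalan n = real Y / (m + 3)"
  proof -
    have "2 * n = Suc (Suc (Suc (Suc (m + m))))" "n = Suc (Suc m)" using m by simp_all
    then show ?thesis unfolding catalan_def Y_def by (simp add: m mult_2 add_ac del: binomial_Suc_Suc)
  qed
  have c2: "catalan (n - 1) = real Z / (m + 2)"
  proof -
    have "2 * (n - 1) = Suc (Suc (m + m))" "n - 1 = Suc m" using m by simp_all
    then show ?thesis unfolding catalan_def Z_def by (simp add: m mult_2 del: binomial_Suc_Suc)
  qed
  have c3: "(2 * n - 2) choose (n - 2) = X"
  proof -
    have "2 * n - 2 = Suc (Suc (m + m))" "n - 2 = m" using m by simp_all
    then show ?thesis unfolding X_def by (simp add: m mult_2 del: binomial_Suc_Suc)
  qed
  have p: "real m + 1 > 0" "real m + 2 > 0" "real m + 3 > 0" by simp_all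
  have n1: "real (n + 1) = real m + 3" using m by simp
  have "2 * ((2 * real m + 3) * real X / (real m + 1)) / (real m + 3)
        - (real m + 2) * real X / (real m + 1) / (real m + 2)
        = 3 / (real m + 3) * real X"
    by (rule alg_aux) simp
  then show ?thesis unfolding c1 c2 c3 r2 r3 r1 n1 by (simp add: add_ac)
qed

theorem theorem4p1:
  fixes n :: nat
  assumes "n \<ge> 2"
  shows "real (card (ballot_avoiding n [3, 2, 1])) = catalan n - catalan (n - 1)
       \<and> catalan n - catalan (n - 1) = 3 / real (n + 1) * real ((2 * n - 2) choose (n - 2))"
  using part1[OF assms] part2[OF assms] by simp

end
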